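(* Let $A$ be a T-brace and let $a\in\zeta_2(\star,A)$. If $a$ has finite order in $(A,+)$ and the additive group of $\zeta_2(\star,A)$ is not periodic, then $x\star a\in\langle a\star a\rangle$ and $a\star x\in\langle a\star a\rangle$ for all $x\in A$, where $\langle a\star a\rangle$ denotes the cyclic subgroup of $(A,+)$ generated by $a\star a$.
   Context: A (left) brace is a set $A$ with two operations $+$ and $\cdot$ such that $(A,+)$ is an abelian group, $(A,\cdot)$ is a group, and $a(b+c)=ab+ac-a$ for all $a,b,c\in A$. Put $a\star b=ab-a-b$. A subbrace is a subset which is a subgroup of both $(A,+)$ and $(A,\cdot)$; a subbrace $L$ is an ideal if $a\star z, z\star a\in L$ for all $a\in A$, $z\in L$, and then the quotient brace $A/L$ is defined. $A$ is a T-brace if whenever $I$ is an ideal of $J$ and $J$ is an ideal of $A$, then $I$ is an ideal of $A$. The $\star$-center is $\zeta(\star,A)=\{a: a\star x=x\star a=0\ \forall x\}$; $\zeta_2(\star,A)$ is given by $\zeta_2(\star,A)/\zeta(\star,A)=\zeta(\star,A/\zeta(\star,A))$. *)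

theory Defs
  imports "HOL-Algebra.Algebra"
begin

text \<open>A (left) brace is given by an additive structure P (an abelian group) and
a multiplicative structure M (a group) on the same carrier, related by the
left brace law a(b+c) = ab + ac - a.\<close>

definition brace :: "'a monoid \<Rightarrow> 'a monoid \<Rightarrow> bool" where
  "brace P M \<longleftrightarrow> comm_group P \<and> group M \<and> carrier P = carrier M \<and>
     (\<forall>a\<in>carrier P. \<forall>b\<in>carrier P. \<forall>c\<in>carrier P.
        a \<otimes>\<^bsub>M\<^esub> (b \<otimes>\<^bsub>P\<^esub> c)
          = ((a \<otimes>\<^bsub>M\<^esub> b) \<otimes>\<^bsub>P\<^esub> (a \<otimes>\<^bsub>M\<^esub> c)) \<otimes>\<^bsub>P\<^esub> inv\<^bsub>P\<^esub> a)"

definition bstar :: "'a monoid \<Rightarrow> 'a monoid \<Rightarrow> 'a \<Rightarrow> 'a \<Rightarrow> 'a" where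
  "bstar P M a b = ((a \<otimes>\<^bsub>M\<^esub> b) \<otimes>\<^bsub>P\<^esub> inv\<^bsub>P\<^esub> a) \<otimes>\<^bsub>P\<^esub> inv\<^bsub>P\<^esub> b"

definition subbrace :: "'a monoid \<Rightarrow> 'a monoid \<Rightarrow> 'a set \<Rightarrow> bool" where
  "subbrace P M S \<longleftrightarrow> subgroup S P \<and> subgroup S M"

text \<open>I is an ideal of the subbrace J (J regarded as a brace in its own right).\<close>
definition ideal_of :: "'a monoid \<Rightarrow> 'a monoid \<Rightarrow> 'a set \<Rightarrow> 'a set \<Rightarrow> bool" where
  "ideal_of P M I J \<longleftrightarrow> subbrace P M J \<and> subbrace P M I \<and> I \<subseteq> J \<and>
     (\<forall>a\<in>J. \<forall>z\<in>I. bstar P M a z \<in> I \<and> bstar P M z a \<in> I)"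

definition brace_ideal :: "'a monoid \<Rightarrow> 'a monoid \<Rightarrow> 'a set \<Rightarrow> bool" where
  "brace_ideal P M I \<longleftrightarrow> ideal_of P M I (carrier P)"

definition T_brace :: "'a monoid \<Rightarrow> 'a monoid \<Rightarrow> bool" where
  "T_brace P M \<longleftrightarrow> brace P M \<and>
     (\<forall>I J. ideal_of P M I J \<and> brace_ideal P M J \<longrightarrow> brace_ideal P M I)"

definition star_center :: "'a monoid \<Rightarrow> 'a monoid \<Rightarrow> 'a set" where
  "star_center P M = {a \<in> carrier P. \<forall>x\<in>carrier P.
      bstar P M a x = \<one>\<^bsub>P\<^esub> \<and> bstar P M x a = \<one>\<^bsub>P\<^esub>}"

text \<open>zeta_2: a + zeta lies in the star-center of A/zeta.  In the quotient brace,
(a+L) star (x+L) = (a star x) + L and the zero is L, so this unfolds to:\<close>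
definition star_center2 :: "'a monoid \<Rightarrow> 'a monoid \<Rightarrow> 'a set" where
  "star_center2 P M = {a \<in> carrier P. \<forall>x\<in>carrier P.
      bstar P M a x \<in> star_center P M \<and> bstar P M x a \<in> star_center P M}"

end

theory Submission
  imports Defs
begin

definition Tset :: "'a monoid \<Rightarrow> 'a \<Rightarrow> 'a set \<Rightarrow> 'a set" where
  "Tset P b C = {b [^]\<^bsub>P\<^esub> (k::int) \<otimes>\<^bsub>P\<^esub> w | k w. w \<in> C}"

locale brc = P: comm_group P + M: group M for P :: "'a monoid" and M :: "'a monoid" +
  assumes carr: "carrier M = carrier P"
  and law: "\<And>a b c. a \<in> carrier P \<Longrightarrow> b \<in> carrier P \<Longrightarrow> c \<in> carrier P \<Longrightarrow>
     a \<otimes>\<^bsub>M\<^esub> (b \<otimes>\<^bsub>P\<^esub> c)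
          = ((a \<otimes>\<^bsub>M\<^esub> b) \<otimes>\<^bsub>P\<^esub> (a \<otimes>\<^bsub>M\<^esub> c)) \<otimes>\<^bsub>P\<^esub> inv\<^bsub>P\<^esub> a"
begin

abbreviation st where "st x y \<equiv> bstar P M x y"
abbreviation Z where "Z \<equiv> star_center P M"
abbreviation Z2 where "Z2 \<equiv> star_center2 P M"

lemma mc[simp]: "x \<in> carrier P \<Longrightarrow> y \<in> carrier P \<Longrightarrow> x \<otimes>\<^bsub>M\<^esub> y \<in> carrier P"
  using carr M.m_closed by auto

lemma cancel1: "x \<in> carrier P \<Longrightarrow> z \<in> carrier P \<Longrightarrow> x \<otimes>\<^bsub>P\<^esub> (inv\<^bsub>P\<^esub> x \<otimes>\<^bsub>P\<^esub> z) = z"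
  by (metis P.inv_closed P.l_one P.m_assoc P.r_inv)
lemma cancel2: "x \<in> carrier P \<Longrightarrow> z \<in> carrier P \<Longrightarrow> inv\<^bsub>P\<^esub> x \<otimes>\<^bsub>P\<^esub> (x \<otimes>\<^bsub>P\<^esub> z) = z"
  by (metis P.inv_closed P.l_one P.m_assoc P.l_inv)

lemmas ac = P.m_ac P.inv_mult cancel1 cancel2

lemma st_closed[simp]: "x \<in> carrier P \<Longrightarrow> y \<in> carrier P \<Longrightarrow> st x y \<in> carrier P"
  unfolding bstar_def by simp

lemma mult_eq: "x \<in> carrier P \<Longrightarrow> y \<in> carrier P \<Longrightarrow>
   x \<otimes>\<^bsub>M\<^esub> y = (x \<otimes>\<^bsub>P\<^esub> y) \<otimes>\<^bsub>P\<^esub> st x y"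
  unfolding bstar_def by (simp add: ac)

lemma one_eq: "\<one>\<^bsub>M\<^esub> = \<one>\<^bsub>P\<^esub>"
proof -
  have o: "\<one>\<^bsub>M\<^esub> \<in> carrier P" using carr by auto
  have "\<one>\<^bsub>M\<^esub> \<otimes>\<^bsub>M\<^esub> (\<one>\<^bsub>P\<^esub> \<otimes>\<^bsub>P\<^esub> \<one>\<^bsub>P\<^esub>)
     = ((\<one>\<^bsub>M\<^esub> \<otimes>\<^bsub>M\<^esub> \<one>\<^bsub>P\<^esub>) \<otimes>\<^bsub>P\<^esub> (\<one>\<^bsub>M\<^esub> \<otimes>\<^bsub>M\<^esub> \<one>\<^bsub>P\<^esub>)) \<otimes>\<^bsub>P\<^esub> inv\<^bsub>P\<^esub> \<one>\<^bsub>M\<^esub>"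
    using law[OF o P.one_closed P.one_closed] by simp
  moreover have "\<one>\<^bsub>M\<^esub> \<otimes>\<^bsub>M\<^esub> \<one>\<^bsub>P\<^esub> = \<one>\<^bsub>P\<^esub>" using carr by simp
  ultimately have "\<one>\<^bsub>P\<^esub> = inv\<^bsub>P\<^esub> \<one>\<^bsub>M\<^esub>" using o by simp
  then show ?thesis using o by (metis P.inv_inv P.inv_one)
qed

lemma mr1[simp]: "x \<in> carrier P \<Longrightarrow> x \<otimes>\<^bsub>M\<^esub> \<one>\<^bsub>P\<^esub> = x"
  using carr M.r_one by (simp flip: one_eq)
lemma ml1[simp]: "x \<in> carrier P \<Longrightarrow> \<one>\<^bsub>P\<^esub> \<otimes>\<^bsub>M\<^esub> x = x"
  using carr M.l_one by (simp flip: one_eq)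

lemma st_add2: "a \<in> carrier P \<Longrightarrow> b \<in> carrier P \<Longrightarrow> c \<in> carrier P \<Longrightarrow>
  st a (b \<otimes>\<^bsub>P\<^esub> c) = st a b \<otimes>\<^bsub>P\<^esub> st a c"
  unfolding bstar_def by (simp add: law ac)

lemma st_one_r[simp]: "a \<in> carrier P \<Longrightarrow> st a \<one>\<^bsub>P\<^esub> = \<one>\<^bsub>P\<^esub>"
  unfolding bstar_def by (simp add: ac)

lemma st_one_l[simp]: "a \<in> carrier P \<Longrightarrow> st \<one>\<^bsub>P\<^esub> a = \<one>\<^bsub>P\<^esub>"
  unfolding bstar_def by (simp add: ac)

lemma st_inv2: "a \<in> carrier P \<Longrightarrow> b \<in> carrier P \<Longrightarrow> st a (inv\<^bsub>P\<^esub> b) = inv\<^bsub>P\<^esub> (st a b)"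
proof -
  assume a: "a \<in> carrier P" and b: "b \<in> carrier P"
  have "st a b \<otimes>\<^bsub>P\<^esub> st a (inv\<^bsub>P\<^esub> b) = \<one>\<^bsub>P\<^esub>"
    using st_add2[OF a b P.inv_closed[OF b]] a b by simp
  then show ?thesis using a b
    by (metis P.inv_equality P.m_comm P.inv_closed st_closed)
qed

lemma st_mult_left: "a \<in> carrier P \<Longrightarrow> b \<in> carrier P \<Longrightarrow> c \<in> carrier P \<Longrightarrow>
  st (a \<otimes>\<^bsub>M\<^esub> b) c = (st a (st b c) \<otimes>\<^bsub>P\<^esub> st b c) \<otimes>\<^bsub>P\<^esub> st a c"
proof -
  assume a: "a \<in> carrier P" and b: "b \<in> carrier P" and c: "c \<in> carrier P"
  define s where "s = st b c"
  have s: "s \<in> carrier P" using a b c s_def by simp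
  have e1: "(a \<otimes>\<^bsub>M\<^esub> b) \<otimes>\<^bsub>M\<^esub> c = a \<otimes>\<^bsub>M\<^esub> (b \<otimes>\<^bsub>M\<^esub> c)"
    using a b c carr M.m_assoc by auto
  have e2: "b \<otimes>\<^bsub>M\<^esub> c = b \<otimes>\<^bsub>P\<^esub> (c \<otimes>\<^bsub>P\<^esub> s)"
    using mult_eq[OF b c] b c s_def by (simp add: P.m_assoc)
  have e3: "a \<otimes>\<^bsub>M\<^esub> (b \<otimes>\<^bsub>P\<^esub> (c \<otimes>\<^bsub>P\<^esub> s)) =
     ((a \<otimes>\<^bsub>M\<^esub> b) \<otimes>\<^bsub>P\<^esub> (((a \<otimes>\<^bsub>M\<^esub> c) \<otimes>\<^bsub>P\<^esub> (a \<otimes>\<^bsub>M\<^esub> s)) \<otimes>\<^bsub>P\<^esub> inv\<^bsub>P\<^esub> a)) \<otimes>\<^bsub>P\<^esub> inv\<^bsub>P\<^esub> a"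
    using a b c s by (simp add: law)
  have "st (a \<otimes>\<^bsub>M\<^esub> b) c = ((a \<otimes>\<^bsub>M\<^esub> (b \<otimes>\<^bsub>P\<^esub> (c \<otimes>\<^bsub>P\<^esub> s))) \<otimes>\<^bsub>P\<^esub> inv\<^bsub>P\<^esub> (a \<otimes>\<^bsub>M\<^esub> b)) \<otimes>\<^bsub>P\<^esub> inv\<^bsub>P\<^esub> c"
    unfolding bstar_def[of P M "a \<otimes>\<^bsub>M\<^esub> b"] e1 e2 ..
  also have "\<dots> = (st a s \<otimes>\<^bsub>P\<^esub> s) \<otimes>\<^bsub>P\<^esub> st a c"
  proof -
    let ?A = "a \<otimes>\<^bsub>M\<^esub> b" and ?C = "a \<otimes>\<^bsub>M\<^esub> c" and ?S = "a \<otimes>\<^bsub>M\<^esub> s"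
    let ?R = "?C \<otimes>\<^bsub>P\<^esub> ?S \<otimes>\<^bsub>P\<^esub> inv\<^bsub>P\<^esub> a \<otimes>\<^bsub>P\<^esub> inv\<^bsub>P\<^esub> a \<otimes>\<^bsub>P\<^esub> inv\<^bsub>P\<^esub> c"
    have 1: "?A \<otimes>\<^bsub>P\<^esub> (?C \<otimes>\<^bsub>P\<^esub> ?S \<otimes>\<^bsub>P\<^esub> inv\<^bsub>P\<^esub> a) \<otimes>\<^bsub>P\<^esub> inv\<^bsub>P\<^esub> a \<otimes>\<^bsub>P\<^esub> inv\<^bsub>P\<^esub> ?A \<otimes>\<^bsub>P\<^esub> inv\<^bsub>P\<^esub> c
       = (?A \<otimes>\<^bsub>P\<^esub> inv\<^bsub>P\<^esub> ?A) \<otimes>\<^bsub>P\<^esub> ?R"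
      using a b c s by (simp only: P.m_ac P.m_closed P.inv_closed mc)
    have 2: "?S \<otimes>\<^bsub>P\<^esub> inv\<^bsub>P\<^esub> a \<otimes>\<^bsub>P\<^esub> inv\<^bsub>P\<^esub> s \<otimes>\<^bsub>P\<^esub> s \<otimes>\<^bsub>P\<^esub> (?C \<otimes>\<^bsub>P\<^esub> inv\<^bsub>P\<^esub> a \<otimes>\<^bsub>P\<^esub> inv\<^bsub>P\<^esub> c)
       = (s \<otimes>\<^bsub>P\<^esub> inv\<^bsub>P\<^esub> s) \<otimes>\<^bsub>P\<^esub> ?R"
      using a b c s by (simp only: P.m_ac P.m_closed P.inv_closed mc)
    show ?thesis unfolding e3 bstar_def[of P M a s] bstar_def[of P M a c] 1 2
      using a b c s by simp
  qed
  finally show ?thesis unfolding s_def .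
qed


lemma inZ: "w \<in> Z \<Longrightarrow> w \<in> carrier P"
  "w \<in> Z \<Longrightarrow> x \<in> carrier P \<Longrightarrow> st w x = \<one>\<^bsub>P\<^esub>"
  "w \<in> Z \<Longrightarrow> x \<in> carrier P \<Longrightarrow> st x w = \<one>\<^bsub>P\<^esub>"
  unfolding star_center_def by auto

lemma inZ2: "y \<in> Z2 \<Longrightarrow> y \<in> carrier P"
  "y \<in> Z2 \<Longrightarrow> x \<in> carrier P \<Longrightarrow> st y x \<in> Z"
  "y \<in> Z2 \<Longrightarrow> x \<in> carrier P \<Longrightarrow> st x y \<in> Z"
  unfolding star_center2_def by auto

lemma one_Z: "\<one>\<^bsub>P\<^esub> \<in> Z"
  unfolding star_center_def by auto

lemma stZ_left: "w \<in> Z \<Longrightarrow> y \<in> carrier P \<Longrightarrow> c \<in> carrier P \<Longrightarrow>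
  st (y \<otimes>\<^bsub>P\<^esub> w) c = st y c"
proof -
  assume w: "w \<in> Z" and y: "y \<in> carrier P" and c: "c \<in> carrier P"
  have wc: "w \<in> carrier P" using inZ w by auto
  have "y \<otimes>\<^bsub>M\<^esub> w = y \<otimes>\<^bsub>P\<^esub> w" using mult_eq[OF y wc] inZ(3)[OF w y] y wc by simp
  then have "st (y \<otimes>\<^bsub>P\<^esub> w) c = st (y \<otimes>\<^bsub>M\<^esub> w) c" by simp
  also have "\<dots> = st y c" using st_mult_left[OF y wc c] inZ(2)[OF w c] y c wc by simp
  finally show ?thesis .
qed

lemma Z_sub: "subgroup Z P"
proof (rule P.subgroupI)
  show "Z \<subseteq> carrier P" using inZ by auto
  show "Z \<noteq> {}" using one_Z by auto
next
  fix w assume w: "w \<in> Z"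
  have wc: "w \<in> carrier P" using inZ w by auto
  have "st (inv\<^bsub>P\<^esub> w) x = \<one>\<^bsub>P\<^esub>" if x: "x \<in> carrier P" for x
  proof -
    have "st (inv\<^bsub>P\<^esub> w) x = st (inv\<^bsub>P\<^esub> w \<otimes>\<^bsub>P\<^esub> w) x" using stZ_left[OF w P.inv_closed[OF wc] x] by simp
    then show ?thesis using wc x by simp
  qed
  moreover have "st x (inv\<^bsub>P\<^esub> w) = \<one>\<^bsub>P\<^esub>" if x: "x \<in> carrier P" for x
    using st_inv2[OF x wc] inZ(3)[OF w x] by simp
  ultimately show "inv\<^bsub>P\<^esub> w \<in> Z" using wc unfolding star_center_def by auto
next
  fix w1 w2 assume w1: "w1 \<in> Z" and w2: "w2 \<in> Z"
  have c1: "w1 \<in> carrier P" and c2: "w2 \<in> carrier P" using inZ w1 w2 by auto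
  have "st (w1 \<otimes>\<^bsub>P\<^esub> w2) x = \<one>\<^bsub>P\<^esub>" if x: "x \<in> carrier P" for x
    using stZ_left[OF w2 c1 x] inZ(2)[OF w1 x] by simp
  moreover have "st x (w1 \<otimes>\<^bsub>P\<^esub> w2) = \<one>\<^bsub>P\<^esub>" if x: "x \<in> carrier P" for x
    using st_add2[OF x c1 c2] inZ(3)[OF w1 x] inZ(3)[OF w2 x] by simp
  ultimately show "w1 \<otimes>\<^bsub>P\<^esub> w2 \<in> Z" using c1 c2 unfolding star_center_def by auto
qed

lemma sum_left: "x \<in> carrier P \<Longrightarrow> y \<in> carrier P \<Longrightarrow> c \<in> carrier P \<Longrightarrow> st x y \<in> Z \<Longrightarrow>
  st (x \<otimes>\<^bsub>P\<^esub> y) c = (st x (st y c) \<otimes>\<^bsub>P\<^esub> st y c) \<otimes>\<^bsub>P\<^esub> st x c"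
proof -
  assume x: "x \<in> carrier P" and y: "y \<in> carrier P" and c: "c \<in> carrier P" and t: "st x y \<in> Z"
  have tc: "st x y \<in> carrier P" using x y by simp
  have ti: "inv\<^bsub>P\<^esub> (st x y) \<in> Z" using t subgroup.m_inv_closed[OF Z_sub] by blast
  have "(x \<otimes>\<^bsub>M\<^esub> y) \<otimes>\<^bsub>P\<^esub> inv\<^bsub>P\<^esub> (st x y) = x \<otimes>\<^bsub>P\<^esub> y"
    unfolding mult_eq[OF x y] using x y tc by (simp add: P.m_assoc)
  then have "st (x \<otimes>\<^bsub>P\<^esub> y) c = st ((x \<otimes>\<^bsub>M\<^esub> y) \<otimes>\<^bsub>P\<^esub> inv\<^bsub>P\<^esub> (st x y)) c" by simp
  also have "\<dots> = st (x \<otimes>\<^bsub>M\<^esub> y) c" using stZ_left[OF ti _ c] x y by simp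
  also have "\<dots> = (st x (st y c) \<otimes>\<^bsub>P\<^esub> st y c) \<otimes>\<^bsub>P\<^esub> st x c" using st_mult_left[OF x y c] .
  finally show ?thesis .
qed

lemma st_add1: "x \<in> Z2 \<Longrightarrow> y \<in> Z2 \<Longrightarrow> c \<in> carrier P \<Longrightarrow>
  st (x \<otimes>\<^bsub>P\<^esub> y) c = st x c \<otimes>\<^bsub>P\<^esub> st y c"
proof -
  assume x: "x \<in> Z2" and y: "y \<in> Z2" and c: "c \<in> carrier P"
  have xc: "x \<in> carrier P" and yc: "y \<in> carrier P" using inZ2 x y by auto
  have "st (x \<otimes>\<^bsub>P\<^esub> y) c = (st x (st y c) \<otimes>\<^bsub>P\<^esub> st y c) \<otimes>\<^bsub>P\<^esub> st x c"
    using sum_left[OF xc yc c inZ2(2)[OF x yc]] .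
  also have "\<dots> = st y c \<otimes>\<^bsub>P\<^esub> st x c" using inZ(3)[OF inZ2(2)[OF y c] xc] xc yc c by simp
  finally show ?thesis using xc yc c P.m_comm by simp
qed

lemma inv_left_Z: "x \<in> Z2 \<Longrightarrow> c \<in> carrier P \<Longrightarrow> st (inv\<^bsub>P\<^esub> x) c \<in> Z"
proof -
  assume x: "x \<in> Z2" and c: "c \<in> carrier P"
  have xc: "x \<in> carrier P" using inZ2 x by auto
  define q where "q = st (inv\<^bsub>P\<^esub> x) c"
  have qc: "q \<in> carrier P" using q_def xc c by simp
  have A: "st x q \<in> Z" using inZ2(2)[OF x qc] .
  have B: "st x c \<in> Z" using inZ2(2)[OF x c] .
  have t: "st x (inv\<^bsub>P\<^esub> x) \<in> Z" using st_inv2[OF xc xc] inZ2(2)[OF x xc]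
      subgroup.m_inv_closed[OF Z_sub] by simp
  have "\<one>\<^bsub>P\<^esub> = st (x \<otimes>\<^bsub>P\<^esub> inv\<^bsub>P\<^esub> x) c" using xc c by simp
  also have "\<dots> = (st x q \<otimes>\<^bsub>P\<^esub> q) \<otimes>\<^bsub>P\<^esub> st x c"
    unfolding q_def using sum_left[OF xc P.inv_closed[OF xc] c t] .
  finally have "q \<otimes>\<^bsub>P\<^esub> (st x q \<otimes>\<^bsub>P\<^esub> st x c) = \<one>\<^bsub>P\<^esub>"
    using qc xc c by (simp add: P.m_ac)
  then have "inv\<^bsub>P\<^esub> (st x q \<otimes>\<^bsub>P\<^esub> st x c) = q"
    using qc xc c by (simp add: P.inv_equality)
  moreover have "inv\<^bsub>P\<^esub> (st x q \<otimes>\<^bsub>P\<^esub> st x c) \<in> Z"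
    using A B Z_sub by (simp add: subgroup.m_closed subgroup.m_inv_closed)
  ultimately show ?thesis unfolding q_def by simp
qed

lemma Z2_sub: "subgroup Z2 P"
proof (rule P.subgroupI)
  show "Z2 \<subseteq> carrier P" using inZ2 by auto
  have "\<one>\<^bsub>P\<^esub> \<in> Z2" unfolding star_center2_def using one_Z by auto
  then show "Z2 \<noteq> {}" by auto
next
  fix x assume x: "x \<in> Z2"
  have xc: "x \<in> carrier P" using inZ2 x by auto
  have "st c (inv\<^bsub>P\<^esub> x) \<in> Z" if c: "c \<in> carrier P" for c
    using st_inv2[OF c xc] inZ2(3)[OF x c] subgroup.m_inv_closed[OF Z_sub] by simp
  then show "inv\<^bsub>P\<^esub> x \<in> Z2" using inv_left_Z[OF x] xc unfolding star_center2_def by auto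
next
  fix x y assume x: "x \<in> Z2" and y: "y \<in> Z2"
  have xc: "x \<in> carrier P" and yc: "y \<in> carrier P" using inZ2 x y by auto
  have "st (x \<otimes>\<^bsub>P\<^esub> y) c \<in> Z" if c: "c \<in> carrier P" for c
    using st_add1[OF x y c] inZ2(2)[OF x c] inZ2(2)[OF y c] subgroup.m_closed[OF Z_sub] by simp
  moreover have "st c (x \<otimes>\<^bsub>P\<^esub> y) \<in> Z" if c: "c \<in> carrier P" for c
    using st_add2[OF c xc yc] inZ2(3)[OF x c] inZ2(3)[OF y c] subgroup.m_closed[OF Z_sub] by simp
  ultimately show "x \<otimes>\<^bsub>P\<^esub> y \<in> Z2" using xc yc unfolding star_center2_def by auto
qed

lemma Z_Z2: "Z \<subseteq> Z2"
  unfolding star_center2_def using inZ one_Z by auto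

lemma Z2_pow: "y \<in> Z2 \<Longrightarrow> y [^]\<^bsub>P\<^esub> (k::int) \<in> Z2"
  using P.subgroup_int_pow_closed[OF Z2_sub] by simp

lemma Z2_npow: "y \<in> Z2 \<Longrightarrow> y [^]\<^bsub>P\<^esub> (k::nat) \<in> Z2"
  using Z2_pow[of y "int k"] by (simp add: int_pow_int)

lemma pow_left_nat: "y \<in> Z2 \<Longrightarrow> c \<in> carrier P \<Longrightarrow> st (y [^]\<^bsub>P\<^esub> (n::nat)) c = (st y c) [^]\<^bsub>P\<^esub> n"
proof (induction n)
  case 0
  then show ?case by simp
next
  case (Suc n)
  then show ?case using st_add1[OF Z2_npow[OF Suc(2)] Suc(2) Suc(3)] by simp
qed

lemma inv_left: "u \<in> Z2 \<Longrightarrow> c \<in> carrier P \<Longrightarrow> st (inv\<^bsub>P\<^esub> u) c = inv\<^bsub>P\<^esub> (st u c)"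
proof -
  assume u: "u \<in> Z2" and c: "c \<in> carrier P"
  have uc: "u \<in> carrier P" using inZ2 u by auto
  have iu: "inv\<^bsub>P\<^esub> u \<in> Z2" using u subgroup.m_inv_closed[OF Z2_sub] by blast
  have "st (inv\<^bsub>P\<^esub> u) c \<otimes>\<^bsub>P\<^esub> st u c = \<one>\<^bsub>P\<^esub>"
    using st_add1[OF iu u c] uc c by simp
  then show ?thesis using uc c by (simp add: P.inv_equality)
qed

lemma int_cases': "\<exists>n::nat. k = int n \<or> k = - int n"
  by presburger

lemma pow_left: "y \<in> Z2 \<Longrightarrow> c \<in> carrier P \<Longrightarrow> st (y [^]\<^bsub>P\<^esub> (k::int)) c = (st y c) [^]\<^bsub>P\<^esub> k"
proof -
  assume y: "y \<in> Z2" and c: "c \<in> carrier P"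
  have yc: "y \<in> carrier P" using inZ2 y by auto
  obtain n where "k = int n \<or> k = - int n" using int_cases' by blast
  then show ?thesis
  proof
    assume "k = int n" then show ?thesis using pow_left_nat[OF y c] by (simp add: int_pow_int)
  next
    assume k: "k = - int n"
    have "st (y [^]\<^bsub>P\<^esub> k) c = st (inv\<^bsub>P\<^esub> (y [^]\<^bsub>P\<^esub> n)) c" using k yc by (simp add: P.int_pow_neg_int)
    also have "\<dots> = inv\<^bsub>P\<^esub> ((st y c) [^]\<^bsub>P\<^esub> n)" using inv_left[OF Z2_npow[OF y] c] pow_left_nat[OF y c] by simp
    also have "\<dots> = (st y c) [^]\<^bsub>P\<^esub> k" using k yc c by (simp add: P.int_pow_neg_int)
    finally show ?thesis .
  qed
qed

lemma pow_right_nat: "x \<in> carrier P \<Longrightarrow> y \<in> carrier P \<Longrightarrow> st x (y [^]\<^bsub>P\<^esub> (n::nat)) = (st x y) [^]\<^bsub>P\<^esub> n"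
  by (induction n) (simp_all add: st_add2)

lemma pow_right: "x \<in> carrier P \<Longrightarrow> y \<in> carrier P \<Longrightarrow> st x (y [^]\<^bsub>P\<^esub> (k::int)) = (st x y) [^]\<^bsub>P\<^esub> k"
proof -
  assume x: "x \<in> carrier P" and y: "y \<in> carrier P"
  obtain n where "k = int n \<or> k = - int n" using int_cases' by blast
  then show ?thesis
    using pow_right_nat[OF x y] st_inv2[OF x] x y by (auto simp add: int_pow_int P.int_pow_neg_int)
qed


lemma Tset_Z2: "b \<in> Z2 \<Longrightarrow> C \<subseteq> Z \<Longrightarrow> Tset P b C \<subseteq> Z2"
  unfolding Tset_def using Z2_pow Z_Z2 subgroup.m_closed[OF Z2_sub] by blast

lemma Tset_sub: "b \<in> Z2 \<Longrightarrow> C \<subseteq> Z \<Longrightarrow> subgroup C P \<Longrightarrow> subgroup (Tset P b C) P"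
proof (rule P.subgroupI)
  assume b: "b \<in> Z2" and CZ: "C \<subseteq> Z" and C: "subgroup C P"
  have bc: "b \<in> carrier P" using inZ2 b by auto
  have Cc: "w \<in> C \<Longrightarrow> w \<in> carrier P" for w using C subgroup.subset by blast
  show "Tset P b C \<subseteq> carrier P" using Tset_Z2[OF b CZ] inZ2 by auto
  have "b [^]\<^bsub>P\<^esub> (0::int) \<otimes>\<^bsub>P\<^esub> \<one>\<^bsub>P\<^esub> \<in> Tset P b C"
    unfolding Tset_def using subgroup.one_closed[OF C] by blast
  then show "Tset P b C \<noteq> {}" by auto
  fix u assume "u \<in> Tset P b C"
  then obtain k w where u: "u = b [^]\<^bsub>P\<^esub> (k::int) \<otimes>\<^bsub>P\<^esub> w" and w: "w \<in> C" unfolding Tset_def by auto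
  have "inv\<^bsub>P\<^esub> u = b [^]\<^bsub>P\<^esub> (-k) \<otimes>\<^bsub>P\<^esub> inv\<^bsub>P\<^esub> w"
    unfolding u using bc Cc[OF w] by (simp add: P.inv_mult P.int_pow_neg)
  then show "inv\<^bsub>P\<^esub> u \<in> Tset P b C" unfolding Tset_def using subgroup.m_inv_closed[OF C w] by blast
next
  assume b: "b \<in> Z2" and CZ: "C \<subseteq> Z" and C: "subgroup C P"
  have bc: "b \<in> carrier P" using inZ2 b by auto
  have Cc: "w \<in> C \<Longrightarrow> w \<in> carrier P" for w using C subgroup.subset by blast
  fix u v assume "u \<in> Tset P b C" "v \<in> Tset P b C"
  then obtain k w l w' where u: "u = b [^]\<^bsub>P\<^esub> (k::int) \<otimes>\<^bsub>P\<^esub> w" and w: "w \<in> C"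
    and v: "v = b [^]\<^bsub>P\<^esub> (l::int) \<otimes>\<^bsub>P\<^esub> w'" and w': "w' \<in> C" unfolding Tset_def by auto
  have "u \<otimes>\<^bsub>P\<^esub> v = b [^]\<^bsub>P\<^esub> (k + l) \<otimes>\<^bsub>P\<^esub> (w \<otimes>\<^bsub>P\<^esub> w')"
    unfolding u v using bc Cc[OF w] Cc[OF w'] by (simp add: P.int_pow_mult P.m_ac)
  then show "u \<otimes>\<^bsub>P\<^esub> v \<in> Tset P b C" unfolding Tset_def using subgroup.m_closed[OF C w w'] by blast
qed

lemma Tset_star: "b \<in> Z2 \<Longrightarrow> w \<in> Z \<Longrightarrow> w' \<in> Z \<Longrightarrow>
  st (b [^]\<^bsub>P\<^esub> (k::int) \<otimes>\<^bsub>P\<^esub> w) (b [^]\<^bsub>P\<^esub> (l::int) \<otimes>\<^bsub>P\<^esub> w') = (st b b) [^]\<^bsub>P\<^esub> (l * k)"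
proof -
  assume b: "b \<in> Z2" and w: "w \<in> Z" and w': "w' \<in> Z"
  have bc: "b \<in> carrier P" using inZ2 b by auto
  have wc: "w \<in> carrier P" "w' \<in> carrier P" using inZ w w' by auto
  have "st (b [^]\<^bsub>P\<^esub> k \<otimes>\<^bsub>P\<^esub> w) (b [^]\<^bsub>P\<^esub> l \<otimes>\<^bsub>P\<^esub> w') = st (b [^]\<^bsub>P\<^esub> k) (b [^]\<^bsub>P\<^esub> l \<otimes>\<^bsub>P\<^esub> w')"
    using stZ_left[OF w] bc wc by simp
  also have "\<dots> = st (b [^]\<^bsub>P\<^esub> k) (b [^]\<^bsub>P\<^esub> l)"
    using st_add2 inZ(3)[OF w'] bc wc by simp
  also have "\<dots> = (st b (b [^]\<^bsub>P\<^esub> l)) [^]\<^bsub>P\<^esub> k" using pow_left[OF b] bc by simp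
  also have "\<dots> = (st b b) [^]\<^bsub>P\<^esub> (l * k)" using pow_right bc by (simp add: P.int_pow_pow)
  finally show ?thesis .
qed

lemma subM: "S \<subseteq> Z2 \<Longrightarrow> subgroup S P \<Longrightarrow> (\<And>u v. u \<in> S \<Longrightarrow> v \<in> S \<Longrightarrow> st u v \<in> S) \<Longrightarrow> subgroup S M"
proof (rule M.subgroupI)
  assume S2: "S \<subseteq> Z2" and S: "subgroup S P" and cl: "\<And>u v. u \<in> S \<Longrightarrow> v \<in> S \<Longrightarrow> st u v \<in> S"
  have Sc: "u \<in> S \<Longrightarrow> u \<in> carrier P" for u using S subgroup.subset by blast
  show "S \<subseteq> carrier M" using Sc carr by auto
  show "S \<noteq> {}" using subgroup.one_closed[OF S] by auto
  fix u v assume u: "u \<in> S" and v: "v \<in> S"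
  show "u \<otimes>\<^bsub>M\<^esub> v \<in> S" using mult_eq Sc[OF u] Sc[OF v] cl[OF u v] subgroup.m_closed[OF S] u v by simp
next
  assume S2: "S \<subseteq> Z2" and S: "subgroup S P" and cl: "\<And>u v. u \<in> S \<Longrightarrow> v \<in> S \<Longrightarrow> st u v \<in> S"
  have Sc: "u \<in> S \<Longrightarrow> u \<in> carrier P" for u using S subgroup.subset by blast
  fix u assume u: "u \<in> S"
  have uc: "u \<in> carrier P" using Sc[OF u] .
  define v where "v = inv\<^bsub>P\<^esub> u \<otimes>\<^bsub>P\<^esub> st u u"
  have vc: "v \<in> carrier P" using v_def uc by simp
  have vS: "v \<in> S" using v_def u cl[OF u u] subgroup.m_closed[OF S] subgroup.m_inv_closed[OF S] by simp
  have uuZ: "st u u \<in> Z" using inZ2(2) S2 u uc by auto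
  have "st u v = inv\<^bsub>P\<^esub> (st u u)"
    unfolding v_def using st_add2 st_inv2 inZ(3)[OF uuZ uc] uc by simp
  then have "u \<otimes>\<^bsub>M\<^esub> v = \<one>\<^bsub>P\<^esub>"
    unfolding mult_eq[OF uc vc] unfolding v_def using uc by (simp add: cancel1)
  then have "inv\<^bsub>M\<^esub> u = v"
    using uc vc carr by (metis M.inv_closed M.l_inv M.m_assoc M.l_one M.r_one one_eq)
  then show "inv\<^bsub>M\<^esub> u \<in> S" using vS by simp
qed

lemma KEY:
  assumes T: "\<forall>I J. ideal_of P M I J \<and> brace_ideal P M J \<longrightarrow> brace_ideal P M I"
    and b: "b \<in> Z2" and x: "x \<in> carrier P"
  shows "\<exists>k l. st x b = b [^]\<^bsub>P\<^esub> (k::int) \<otimes>\<^bsub>P\<^esub> (st b b) [^]\<^bsub>P\<^esub> (l::int)"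
    and "\<exists>k l. st b x = b [^]\<^bsub>P\<^esub> (k::int) \<otimes>\<^bsub>P\<^esub> (st b b) [^]\<^bsub>P\<^esub> (l::int)"
proof -
  have bc: "b \<in> carrier P" using inZ2 b by auto
  define s where "s = st b b"
  have sZ: "s \<in> Z" using inZ2(2)[OF b bc] s_def by simp
  have sc: "s \<in> carrier P" using sZ inZ by auto
  define G where "G = generate P {s}"
  have Gp: "G = {s [^]\<^bsub>P\<^esub> (k::int) | k. k \<in> UNIV}" unfolding G_def using P.generate_pow[OF sc] .
  have Gsub: "subgroup G P" unfolding G_def using P.generate_is_subgroup sc by simp
  have GZ: "G \<subseteq> Z" unfolding G_def using P.generate_subgroup_incl[OF _ Z_sub] sZ by simp
  have sG: "s \<in> G" unfolding G_def by (simp add: generate.incl)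
  define J where "J = Tset P b Z"
  define I where "I = Tset P b G"
  have J2: "J \<subseteq> Z2" unfolding J_def using Tset_Z2[OF b] by simp
  have I2: "I \<subseteq> Z2" unfolding I_def using Tset_Z2[OF b GZ] .
  have JP: "subgroup J P" unfolding J_def using Tset_sub[OF b _ Z_sub] by simp
  have IP: "subgroup I P" unfolding I_def using Tset_sub[OF b GZ Gsub] .
  have starJ: "st u v \<in> G" if uJ: "u \<in> J" and vJ: "v \<in> J" for u v
  proof -
    obtain k w where u: "u = b [^]\<^bsub>P\<^esub> (k::int) \<otimes>\<^bsub>P\<^esub> w" and w: "w \<in> Z"
      using uJ unfolding J_def Tset_def by blast
    obtain l w' where v: "v = b [^]\<^bsub>P\<^esub> (l::int) \<otimes>\<^bsub>P\<^esub> w'" and w': "w' \<in> Z"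
      using vJ unfolding J_def Tset_def by blast
    show ?thesis unfolding u v Tset_star[OF b w w'] Gp s_def by blast
  qed
  have GI: "g \<in> G \<Longrightarrow> g \<in> I" for g
  proof -
    assume g: "g \<in> G"
    have "g = b [^]\<^bsub>P\<^esub> (0::int) \<otimes>\<^bsub>P\<^esub> g" using g GZ inZ by auto
    then show ?thesis unfolding I_def Tset_def using g by blast
  qed
  have IJ: "I \<subseteq> J" unfolding I_def J_def Tset_def using GZ by blast
  have ZJ: "w \<in> Z \<Longrightarrow> w \<in> J" for w
  proof -
    assume w: "w \<in> Z"
    have "w = b [^]\<^bsub>P\<^esub> (0::int) \<otimes>\<^bsub>P\<^esub> w" using w inZ by auto
    then show ?thesis unfolding J_def Tset_def using w by blast
  qed
  have JM: "subgroup J M" using subM[OF J2 JP] starJ GI IJ by blast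
  have IM: "subgroup I M" using subM[OF I2 IP] starJ GI IJ by blast
  have subC: "subbrace P M (carrier P)" unfolding subbrace_def using P.subgroup_self M.subgroup_self carr by simp
  have "brace_ideal P M J" unfolding brace_ideal_def ideal_of_def
    using subC JP JM J2 inZ2 ZJ unfolding subbrace_def by blast
  moreover have "ideal_of P M I J" unfolding ideal_of_def subbrace_def
    using JP JM IP IM IJ starJ GI by blast
  ultimately have BI: "brace_ideal P M I" using T by blast
  have bI: "b \<in> I"
  proof -
    have "b = b [^]\<^bsub>P\<^esub> (1::int) \<otimes>\<^bsub>P\<^esub> \<one>\<^bsub>P\<^esub>" using bc by simp
    then show ?thesis unfolding I_def Tset_def using subgroup.one_closed[OF Gsub] by blast
  qed
  have "st x b \<in> I" "st b x \<in> I" using BI bI x unfolding brace_ideal_def ideal_of_def by auto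
  then show "\<exists>k l. st x b = b [^]\<^bsub>P\<^esub> (k::int) \<otimes>\<^bsub>P\<^esub> (st b b) [^]\<^bsub>P\<^esub> (l::int)"
    and "\<exists>k l. st b x = b [^]\<^bsub>P\<^esub> (k::int) \<otimes>\<^bsub>P\<^esub> (st b b) [^]\<^bsub>P\<^esub> (l::int)"
    unfolding I_def Tset_def Gp s_def by auto
qed


lemma killN: "w \<in> carrier P \<Longrightarrow> w [^]\<^bsub>P\<^esub> (m::nat) = \<one>\<^bsub>P\<^esub> \<Longrightarrow> m dvd N \<Longrightarrow> w [^]\<^bsub>P\<^esub> N = \<one>\<^bsub>P\<^esub>"
proof -
  assume w: "w \<in> carrier P" and m: "w [^]\<^bsub>P\<^esub> m = \<one>\<^bsub>P\<^esub>" and d: "m dvd N"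
  then obtain q where "N = m * q" by (auto elim: dvdE)
  then show ?thesis using m w by (simp add: P.nat_pow_pow[symmetric])
qed

lemma inf_int: "c \<in> carrier P \<Longrightarrow> \<forall>m::nat. m > 0 \<longrightarrow> c [^]\<^bsub>P\<^esub> m \<noteq> \<one>\<^bsub>P\<^esub> \<Longrightarrow>
   c [^]\<^bsub>P\<^esub> (j::int) = \<one>\<^bsub>P\<^esub> \<Longrightarrow> j = 0"
proof -
  assume c: "c \<in> carrier P" and inf: "\<forall>m::nat. m > 0 \<longrightarrow> c [^]\<^bsub>P\<^esub> m \<noteq> \<one>\<^bsub>P\<^esub>"
    and j: "c [^]\<^bsub>P\<^esub> j = \<one>\<^bsub>P\<^esub>"
  obtain m where "j = int m \<or> j = - int m" using int_cases' by blast
  then have "c [^]\<^bsub>P\<^esub> m = \<one>\<^bsub>P\<^esub>"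
  proof
    assume "j = int m" then show ?thesis using j by (simp add: int_pow_int)
  next
    assume "j = - int m"
    then have "inv\<^bsub>P\<^esub> (c [^]\<^bsub>P\<^esub> m) = \<one>\<^bsub>P\<^esub>" using j c by (simp add: P.int_pow_neg_int)
    then show ?thesis using c by (metis P.inv_inv P.inv_one P.nat_pow_closed)
  qed
  then have "m = 0" using inf by auto
  then show "j = 0" using \<open>j = int m \<or> j = - int m\<close> by auto
qed

lemma fin:
  assumes y: "y \<in> carrier P" and n: "n > 0" and yn: "y [^]\<^bsub>P\<^esub> (n::nat) = \<one>\<^bsub>P\<^esub>"
    and ye: "y = (a \<otimes>\<^bsub>P\<^esub> c) [^]\<^bsub>P\<^esub> (k::int) \<otimes>\<^bsub>P\<^esub> s [^]\<^bsub>P\<^esub> (l::int)"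
    and sn: "s [^]\<^bsub>P\<^esub> n = \<one>\<^bsub>P\<^esub>" and an: "a [^]\<^bsub>P\<^esub> n = \<one>\<^bsub>P\<^esub>"
    and inf: "\<forall>m::nat. m > 0 \<longrightarrow> c [^]\<^bsub>P\<^esub> m \<noteq> \<one>\<^bsub>P\<^esub>"
    and ac: "a \<in> carrier P" "c \<in> carrier P" "s \<in> carrier P"
  shows "y \<in> generate P {s}"
proof -
  have "\<one>\<^bsub>P\<^esub> = y [^]\<^bsub>P\<^esub> (int n)" using yn by (simp add: int_pow_int)
  also have "\<dots> = (a [^]\<^bsub>P\<^esub> (int n)) [^]\<^bsub>P\<^esub> k \<otimes>\<^bsub>P\<^esub> c [^]\<^bsub>P\<^esub> (k * int n) \<otimes>\<^bsub>P\<^esub> (s [^]\<^bsub>P\<^esub> (int n)) [^]\<^bsub>P\<^esub> l"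
    unfolding ye using ac by (simp add: P.int_pow_distrib P.int_pow_pow mult.commute)
  also have "\<dots> = c [^]\<^bsub>P\<^esub> (k * int n)" using an sn ac by (simp add: int_pow_int)
  finally have "c [^]\<^bsub>P\<^esub> (k * int n) = \<one>\<^bsub>P\<^esub>" by simp
  then have "k * int n = 0" using inf_int[OF ac(2) inf] by blast
  then have "k = 0" using n by simp
  then have "y = s [^]\<^bsub>P\<^esub> l" using ye ac by simp
  then show ?thesis using P.generate_pow[OF ac(3)] by auto
qed

lemma main:
  assumes T: "\<forall>I J. ideal_of P M I J \<and> brace_ideal P M J \<longrightarrow> brace_ideal P M I"
    and a: "a \<in> Z2" and n: "n > 0" and an: "a [^]\<^bsub>P\<^esub> (n::nat) = \<one>\<^bsub>P\<^esub>"
    and z: "z \<in> Z2" and zinf: "\<forall>m::nat. m > 0 \<longrightarrow> z [^]\<^bsub>P\<^esub> m \<noteq> \<one>\<^bsub>P\<^esub>"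
    and x: "x \<in> carrier P"
  shows "st x a \<in> generate P {st a a} \<and> st a x \<in> generate P {st a a}"
proof -
  have ac: "a \<in> carrier P" using a inZ2 by auto
  have zc: "z \<in> carrier P" using z inZ2 by auto
  obtain c where c: "c \<in> Z2" and cinf: "\<forall>m::nat. m > 0 \<longrightarrow> c [^]\<^bsub>P\<^esub> m \<noteq> \<one>\<^bsub>P\<^esub>"
    and c1: "st x c = \<one>\<^bsub>P\<^esub>" and c2: "st c x = \<one>\<^bsub>P\<^esub>" and c3: "st a c = \<one>\<^bsub>P\<^esub>"
    and c4: "st c a = \<one>\<^bsub>P\<^esub>" and c5: "st c c = \<one>\<^bsub>P\<^esub>"
  proof (cases "\<exists>w\<in>Z. \<forall>m::nat. m > 0 \<longrightarrow> w [^]\<^bsub>P\<^esub> m \<noteq> \<one>\<^bsub>P\<^esub>")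
    case True
    then obtain w where w: "w \<in> Z" and winf: "\<forall>m::nat. m > 0 \<longrightarrow> w [^]\<^bsub>P\<^esub> m \<noteq> \<one>\<^bsub>P\<^esub>" by blast
    have wc: "w \<in> carrier P" using w inZ by auto
    show ?thesis
      using that[of w] w winf Z_Z2 inZ(2)[OF w] inZ(3)[OF w] x ac wc by blast
  next
    case False
    then have per: "\<And>w. w \<in> Z \<Longrightarrow> \<exists>m::nat. m > 0 \<and> w [^]\<^bsub>P\<^esub> m = \<one>\<^bsub>P\<^esub>" by auto
    obtain m1 :: nat where m1: "m1 > 0" "(st z x) [^]\<^bsub>P\<^esub> m1 = \<one>\<^bsub>P\<^esub>" using per[OF inZ2(2)[OF z x]] by blast
    obtain m2 :: nat where m2: "m2 > 0" "(st x z) [^]\<^bsub>P\<^esub> m2 = \<one>\<^bsub>P\<^esub>" using per[OF inZ2(3)[OF z x]] by blast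
    obtain m3 :: nat where m3: "m3 > 0" "(st a z) [^]\<^bsub>P\<^esub> m3 = \<one>\<^bsub>P\<^esub>" using per[OF inZ2(3)[OF z ac]] by blast
    obtain m4 :: nat where m4: "m4 > 0" "(st z a) [^]\<^bsub>P\<^esub> m4 = \<one>\<^bsub>P\<^esub>" using per[OF inZ2(2)[OF z ac]] by blast
    obtain m5 :: nat where m5: "m5 > 0" "(st z z) [^]\<^bsub>P\<^esub> m5 = \<one>\<^bsub>P\<^esub>" using per[OF inZ2(2)[OF z zc]] by blast
    define N where "N = m1 * m2 * m3 * m4 * m5"
    have N: "N > 0" unfolding N_def using m1 m2 m3 m4 m5 by simp
    define c where "c = z [^]\<^bsub>P\<^esub> N"
    have cZ2: "c \<in> Z2" unfolding c_def using Z2_npow[OF z] .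
    have cc: "c \<in> carrier P" using cZ2 inZ2 by auto
    have "c [^]\<^bsub>P\<^esub> m \<noteq> \<one>\<^bsub>P\<^esub>" if "m > 0" for m :: nat
      unfolding c_def using zinf that N zc by (simp add: P.nat_pow_pow)
    moreover have "st x c = \<one>\<^bsub>P\<^esub>" unfolding c_def pow_right_nat[OF x zc]
      by (rule killN[OF _ m2(2)]) (auto simp: N_def x zc)
    moreover have "st c x = \<one>\<^bsub>P\<^esub>" unfolding c_def pow_left_nat[OF z x]
      by (rule killN[OF _ m1(2)]) (auto simp: N_def x zc)
    moreover have "st a c = \<one>\<^bsub>P\<^esub>" unfolding c_def pow_right_nat[OF ac zc]
      by (rule killN[OF _ m3(2)]) (auto simp: N_def ac zc)
    moreover have "st c a = \<one>\<^bsub>P\<^esub>" unfolding c_def pow_left_nat[OF z ac]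
      by (rule killN[OF _ m4(2)]) (auto simp: N_def ac zc)
    moreover have "st c c = \<one>\<^bsub>P\<^esub>"
    proof -
      have "st z c = \<one>\<^bsub>P\<^esub>" unfolding c_def pow_right_nat[OF zc zc]
        by (rule killN[OF _ m5(2)]) (auto simp: N_def zc)
      then show ?thesis using pow_left_nat[OF z cc] unfolding c_def by simp
    qed
    ultimately show ?thesis using that[of c] cZ2 by blast
  qed
  have cc: "c \<in> carrier P" using c inZ2 by auto
  define b where "b = a \<otimes>\<^bsub>P\<^esub> c"
  have b: "b \<in> Z2" unfolding b_def using subgroup.m_closed[OF Z2_sub a c] .
  have bc: "b \<in> carrier P" using b inZ2 by auto
  have xb: "st x b = st x a" unfolding b_def using st_add2[OF x ac cc] c1 x ac by simp
  have bx: "st b x = st a x" unfolding b_def using st_add1[OF a c x] c2 x ac by simp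
  have bb: "st b b = st a a"
  proof -
    have "st b b = st a b \<otimes>\<^bsub>P\<^esub> st c b" unfolding b_def[of] using st_add1[OF a c bc] b_def by simp
    also have "\<dots> = st a a" unfolding b_def using st_add2[OF ac ac cc] st_add2[OF cc ac cc] c3 c4 c5 ac cc by simp
    finally show ?thesis .
  qed
  define s where "s = st a a"
  have sc: "s \<in> carrier P" using s_def ac by simp
  have sn: "s [^]\<^bsub>P\<^esub> n = \<one>\<^bsub>P\<^esub>" unfolding s_def using pow_right_nat[OF ac ac, of n] an ac by simp
  obtain k l where e1: "st x a = b [^]\<^bsub>P\<^esub> (k::int) \<otimes>\<^bsub>P\<^esub> s [^]\<^bsub>P\<^esub> (l::int)"
    using KEY(1)[OF T b x] xb bb s_def by auto
  obtain k' l' where e2: "st a x = b [^]\<^bsub>P\<^esub> (k'::int) \<otimes>\<^bsub>P\<^esub> s [^]\<^bsub>P\<^esub> (l'::int)"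
    using KEY(2)[OF T b x] bx bb s_def by auto
  have p1: "(st x a) [^]\<^bsub>P\<^esub> n = \<one>\<^bsub>P\<^esub>" using pow_right_nat[OF x ac, of n] an x by simp
  have p2: "(st a x) [^]\<^bsub>P\<^esub> n = \<one>\<^bsub>P\<^esub>" using pow_left_nat[OF a x, of n] an x by simp
  have "st x a \<in> generate P {s}"
    using fin[OF _ n p1 e1[unfolded b_def] sn an cinf ac cc sc] x ac by simp
  moreover have "st a x \<in> generate P {s}"
    using fin[OF _ n p2 e2[unfolded b_def] sn an cinf ac cc sc] x ac by simp
  ultimately show ?thesis unfolding s_def by simp
qed

end

theorem lemma4p4:
  fixes P M :: "'a monoid"
  assumes "T_brace P M"
    and "a \<in> star_center2 P M"
    and "\<exists>n::nat. n > 0 \<and> a [^]\<^bsub>P\<^esub> n = \<one>\<^bsub>P\<^esub>"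
    and "\<exists>z\<in>star_center2 P M. \<forall>n::nat. n > 0 \<longrightarrow> z [^]\<^bsub>P\<^esub> n \<noteq> \<one>\<^bsub>P\<^esub>"
  shows "\<forall>x\<in>carrier P.
           bstar P M x a \<in> generate P {bstar P M a a} \<and>
           bstar P M a x \<in> generate P {bstar P M a a}"
proof
  fix x assume x: "x \<in> carrier P"
  have br: "brc P M" using assms(1) unfolding T_brace_def brace_def brc_def brc_axioms_def by auto
  have T: "\<forall>I J. ideal_of P M I J \<and> brace_ideal P M J \<longrightarrow> brace_ideal P M I"
    using assms(1) unfolding T_brace_def by blast
  obtain n :: nat where n: "n > 0" "a [^]\<^bsub>P\<^esub> n = \<one>\<^bsub>P\<^esub>" using assms(3) by blast
  obtain z where z: "z \<in> star_center2 P M" "\<forall>n::nat. n > 0 \<longrightarrow> z [^]\<^bsub>P\<^esub> n \<noteq> \<one>\<^bsub>P\<^esub>"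
    using assms(4) by blast
  show "bstar P M x a \<in> generate P {bstar P M a a} \<and> bstar P M a x \<in> generate P {bstar P M a a}"
    using brc.main[OF br T assms(2) n z x] .
qed

end
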